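(* Let $\mathsf{M}_{\rho_0}[\boldsymbol{\beta},\boldsymbol{\alpha}]\triangleq\mathbb{E}_{\rho_0(\mathbf{x})}[\boldsymbol{\beta}(\mathbf{x})\boldsymbol{\alpha}(\mathbf{x})^\intercal]$. Let $\mathbf{z}\in\mathbb{C}^r$ be a left eigenvector of $\mathsf{M}_{\rho_0}[\boldsymbol{\beta},\boldsymbol{\alpha}]$ with eigenvalue $\lambda\in\mathbb{C}$, i.e., $\mathbf{z}^*\mathsf{M}_{\rho_0}[\boldsymbol{\beta},\boldsymbol{\alpha}]=\lambda\mathbf{z}^*$. If we define $\zeta(\mathbf{x}')\triangleq\mathbf{z}^\intercal\boldsymbol{\beta}(\mathbf{x}')$, then $\zeta$ is a left eigenfunction of $\mathcal{K}$ with eigenvalue $\lambda$, i.e., $\mathcal{K}^*\zeta=\overline{\lambda}\zeta$.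
   Context: Let $\mathcal{X}\subseteq\mathbb{R}^d$, let $p(\mathbf{x}'|\mathbf{x})$ be the transition density of a time-homogeneous Markov process, and let $\rho_0,\rho_1$ be the distributions of the current and future states. The Koopman operator $\mathcal{K}\colon L^2_{\rho_1}(\mathcal{X})\to L^2_{\rho_0}(\mathcal{X})$ is $(\mathcal{K}g)(\mathbf{x})=\int k(\mathbf{x},\mathbf{x}')g(\mathbf{x}')\rho_1(\mathbf{x}')d\mathbf{x}'$ with kernel $k(\mathbf{x},\mathbf{x}')\triangleq p(\mathbf{x}'|\mathbf{x})/\rho_1(\mathbf{x}')$, and its adjoint is $(\mathcal{K}^*f)(\mathbf{x}')=\int k(\mathbf{x},\mathbf{x}')f(\mathbf{x})\rho_0(\mathbf{x})d\mathbf{x}$. Assume the operator has finite rank with factorized kernel $k(\mathbf{x},\mathbf{x}')=\boldsymbol{\alpha}(\mathbf{x})^\intercal\boldsymbol{\beta}(\mathbf{x}')=\sum_{i=1}^r\alpha_i(\mathbf{x})\beta_i(\mathbf{x}')$. *)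

theory Defs
  imports "HOL-Analysis.Analysis"
begin

text \<open>States live in X \<subseteq> R^d (d encoded by the finite type 'd); integrals are w.r.t.
  Lebesgue measure restricted to X. p x x' is the transition density p(x'|x).\<close>

definition koopman_kernel ::
  "(real^'d \<Rightarrow> real^'d \<Rightarrow> real) \<Rightarrow> (real^'d \<Rightarrow> real) \<Rightarrow> real^'d \<Rightarrow> real^'d \<Rightarrow> real" where
  "koopman_kernel p \<rho>1 x x' = p x x' / \<rho>1 x'"

definition koopman ::
  "(real^'d \<Rightarrow> real^'d \<Rightarrow> real) \<Rightarrow> (real^'d \<Rightarrow> real) \<Rightarrow> (real^'d) set
     \<Rightarrow> (real^'d \<Rightarrow> complex) \<Rightarrow> real^'d \<Rightarrow> complex" where
  "koopman k \<rho>1 X g x = (\<integral>x'\<in>X. complex_of_real (k x x' * \<rho>1 x') * g x' \<partial>lborel)"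

definition koopman_adj ::
  "(real^'d \<Rightarrow> real^'d \<Rightarrow> real) \<Rightarrow> (real^'d \<Rightarrow> real) \<Rightarrow> (real^'d) set
     \<Rightarrow> (real^'d \<Rightarrow> complex) \<Rightarrow> real^'d \<Rightarrow> complex" where
  "koopman_adj k \<rho>0 X f x' = (\<integral>x\<in>X. complex_of_real (k x x' * \<rho>0 x) * f x \<partial>lborel)"

definition expect_dens :: "(real^'d \<Rightarrow> real) \<Rightarrow> (real^'d) set \<Rightarrow> (real^'d \<Rightarrow> real) \<Rightarrow> real" where
  "expect_dens \<rho> X f = (\<integral>x\<in>X. \<rho> x * f x \<partial>lborel)"

definition M_mat :: "(real^'d \<Rightarrow> real) \<Rightarrow> (real^'d) set \<Rightarrow> (real^'d \<Rightarrow> real^'r)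
     \<Rightarrow> (real^'d \<Rightarrow> real^'r) \<Rightarrow> complex^'r^'r" where
  "M_mat \<rho> X \<beta> \<alpha> = (\<chi> i j. complex_of_real (expect_dens \<rho> X (\<lambda>x. \<beta> x $ i * \<alpha> x $ j)))"

end

theory Submission
  imports Defs
begin

theorem theoremC3:
  fixes X :: "(real^'d) set"
    and p :: "real^'d \<Rightarrow> real^'d \<Rightarrow> real"
    and \<rho>0 \<rho>1 :: "real^'d \<Rightarrow> real"
    and \<alpha> \<beta> :: "real^'d \<Rightarrow> real^'r"
    and z :: "complex^'r" and lam :: complex
    and \<zeta> :: "real^'d \<Rightarrow> complex"
  assumes X_meas: "X \<in> sets lborel"
    and p_nonneg: "\<And>x x'. p x x' \<ge> 0"
    and rho0_nonneg: "\<And>x. \<rho>0 x \<ge> 0"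
    and rho1_nonneg: "\<And>x. \<rho>1 x \<ge> 0"
    and factorized: "\<And>x x'. x \<in> X \<Longrightarrow> x' \<in> X \<Longrightarrow>
         koopman_kernel p \<rho>1 x x' = (\<Sum>i\<in>UNIV. \<alpha> x $ i * \<beta> x' $ i)"
    and integrable: "\<And>i j. set_integrable lborel X (\<lambda>x. \<rho>0 x * (\<beta> x $ i * \<alpha> x $ j))"
    and z_nonzero: "z \<noteq> 0"
    and left_eig: "(\<chi> i. cnj (z $ i)) v* M_mat \<rho>0 X \<beta> \<alpha> = lam *s (\<chi> i. cnj (z $ i))"
    and zeta_def: "\<And>x'. \<zeta> x' = (\<Sum>i\<in>UNIV. z $ i * complex_of_real (\<beta> x' $ i))"
  shows "\<forall>x'\<in>X. koopman_adj (koopman_kernel p \<rho>1) \<rho>0 X \<zeta> x' = cnj lam * \<zeta> x'"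
proof
  fix x' assume x'X: "x' \<in> X"
  define M where "M = M_mat \<rho>0 X \<beta> \<alpha>"
  define E where "E = (\<lambda>j i. LINT x|lborel. indicator X x * (\<rho>0 x * (\<beta> x $ j * \<alpha> x $ i)))"
  have ME: "M $ j $ i = complex_of_real (E j i)" for i j
    unfolding M_def M_mat_def E_def expect_dens_def set_lebesgue_integral_def by simp
  have eigi: "(\<Sum>j\<in>UNIV. z $ j * complex_of_real (E j i)) = cnj lam * z $ i" for i
  proof -
    have "((\<chi> i. cnj (z $ i)) v* M) $ i = (lam *s (\<chi> i. cnj (z $ i))) $ i"
      using left_eig M_def by simp
    hence "(\<Sum>j\<in>UNIV. complex_of_real (E j i) * cnj (z $ j)) = lam * cnj (z $ i)"
      by (simp add: vector_matrix_mult_def ME mult.commute)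
    hence "cnj (\<Sum>j\<in>UNIV. complex_of_real (E j i) * cnj (z $ j)) = cnj (lam * cnj (z $ i))"
      by simp
    thus ?thesis by (simp add: mult.commute)
  qed
  have intg: "integrable lborel (\<lambda>x. indicator X x * (\<rho>0 x * (\<beta> x $ j * \<alpha> x $ i)))" for i j
    using integrable[of j i] unfolding set_integrable_def by simp
  have fun_eq: "(\<lambda>x. indicator X x *\<^sub>R (complex_of_real (koopman_kernel p \<rho>1 x x' * \<rho>0 x) * \<zeta> x))
     = (\<lambda>x. \<Sum>i\<in>UNIV. \<Sum>j\<in>UNIV. (complex_of_real (\<beta> x' $ i) * z $ j) *
            complex_of_real (indicator X x * (\<rho>0 x * (\<beta> x $ j * \<alpha> x $ i))))"
  proof
    fix x
    show "indicator X x *\<^sub>R (complex_of_real (koopman_kernel p \<rho>1 x x' * \<rho>0 x) * \<zeta> x) =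
      (\<Sum>i\<in>UNIV. \<Sum>j\<in>UNIV. (complex_of_real (\<beta> x' $ i) * z $ j) *
            complex_of_real (indicator X x * (\<rho>0 x * (\<beta> x $ j * \<alpha> x $ i))))"
    proof (cases "x \<in> X")
      case True
      have "indicator X x *\<^sub>R (complex_of_real (koopman_kernel p \<rho>1 x x' * \<rho>0 x) * \<zeta> x)
        = (\<Sum>i\<in>UNIV. complex_of_real (\<alpha> x $ i * \<beta> x' $ i)) * complex_of_real (\<rho>0 x) *
          (\<Sum>j\<in>UNIV. z $ j * complex_of_real (\<beta> x $ j))"
        using True x'X by (simp add: factorized zeta_def indicator_def)
      also have "\<dots> = (\<Sum>i\<in>UNIV. \<Sum>j\<in>UNIV. complex_of_real (\<alpha> x $ i * \<beta> x' $ i) * complex_of_real (\<rho>0 x) *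
          (z $ j * complex_of_real (\<beta> x $ j)))"
        by (simp only: sum_distrib_left sum_distrib_right) (rule sum.swap)
      also have "\<dots> = (\<Sum>i\<in>UNIV. \<Sum>j\<in>UNIV. (complex_of_real (\<beta> x' $ i) * z $ j) *
            complex_of_real (indicator X x * (\<rho>0 x * (\<beta> x $ j * \<alpha> x $ i))))"
        using True by (intro sum.cong refl) (simp add: indicator_def mult_ac)
      finally show ?thesis .
    qed (simp add: indicator_def)
  qed
  have "koopman_adj (koopman_kernel p \<rho>1) \<rho>0 X \<zeta> x'
     = (\<Sum>i\<in>UNIV. \<Sum>j\<in>UNIV. (complex_of_real (\<beta> x' $ i) * z $ j) * complex_of_real (E j i))"
    unfolding koopman_adj_def set_lebesgue_integral_def fun_eq E_def
    by (simp del: of_real_mult add: intg)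
  also have "\<dots> = (\<Sum>i\<in>UNIV. complex_of_real (\<beta> x' $ i) * (\<Sum>j\<in>UNIV. z $ j * complex_of_real (E j i)))"
    by (simp add: sum_distrib_left mult.assoc)
  also have "\<dots> = cnj lam * \<zeta> x'"
    by (simp add: eigi zeta_def sum_distrib_left mult_ac)
  finally show "koopman_adj (koopman_kernel p \<rho>1) \<rho>0 X \<zeta> x' = cnj lam * \<zeta> x'" .
qed

end
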